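(* Let $\Gamma_F\subset\mathbb R^4_{\ge0}$ be the Newton polyhedron of the set $$\{(10,0,0,0),(0,10,0,0),(0,0,10,0),(0,0,0,10),(5,1,0,0),(5,0,1,0),(5,0,0,1),(0,1,1,0),(0,0,1,1)\},$$ and let $\Gamma_G$ be the Newton polyhedron of this set together with $W=(9,0,0,0)$. Then $\Gamma_F\subsetneq\Gamma_G$ and $\nu(\Gamma_F)=\nu(\Gamma_G)$.
   Context: The Newton polyhedron of a finite $\mathbf S\subset\mathbb Z^4_{\ge0}$ is $\mathrm{Conv}\bigcup_{a\in\mathbf S}(a+\mathbb R^4_{\ge0})$. For a convenient Newton polyhedron $\Gamma\subset\mathbb R^n_{\ge0}$, the Newton number is $$\nu(\Gamma)=\sum_{\emptyset\ne J\subseteq\{1..n\}}(-1)^{n-|J|}|J|!\,\mathrm{Vol}_{|J|}(\mathbb R^J_{\ge0}\setminus\Gamma)+(-1)^n,$$ where $\mathbb R^J$ is spanned by $e_j$, $j\in J$. *)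

theory Defs
  imports "HOL-Analysis.Analysis"
begin

definition newton_polyhedron :: "(real^'n) set \<Rightarrow> (real^'n) set" where
  "newton_polyhedron S =
     convex hull (\<Union>a\<in>S. (\<lambda>v. a + v) ` {v. \<forall>i. 0 \<le> v $ i})"

definition zero_ext :: "'n set \<Rightarrow> ('n \<Rightarrow> real) \<Rightarrow> real^'n" where
  "zero_ext J y = (\<chi> i. if i \<in> J then y i else 0)"

text \<open>|J|-dimensional volume of R^J_{>=0} minus Gamma, where R^J is the coordinate
  subspace spanned by e_j, j in J, identified with R^J via the product of
  Lebesgue measures.\<close>
definition vol_compl :: "'n set \<Rightarrow> (real^'n) set \<Rightarrow> real" where
  "vol_compl J \<Gamma> =
     measure (PiM J (\<lambda>_. lborel))
       {y \<in> PiE J (\<lambda>_. UNIV). (\<forall>j\<in>J. 0 \<le> y j) \<and> zero_ext J y \<notin> \<Gamma>}"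

definition newton_number :: "(real^'n::finite) set \<Rightarrow> real" where
  "newton_number \<Gamma> =
     (\<Sum>J\<in>{J. J \<noteq> {}}. (-1) ^ (CARD('n) - card J) * fact (card J) * vol_compl J \<Gamma>)
     + (-1) ^ CARD('n)"

end

theory Submission
  imports Defs
begin


definition orth :: "(real^'n) set" where "orth = {v. \<forall>i. 0 \<le> v $ i}"

lemma np_alt: "newton_polyhedron S = convex hull (\<Union>a\<in>S. (+) a ` orth)"
  unfolding newton_polyhedron_def orth_def by simp

lemma convex_orth: "convex orth"
  unfolding convex_def orth_def by (auto intro!: add_nonneg_nonneg mult_nonneg_nonneg)

lemma orth_add: "x \<in> orth \<Longrightarrow> y \<in> orth \<Longrightarrow> x + y \<in> orth"
  unfolding orth_def by auto

lemma orth_scale: "x \<in> orth \<Longrightarrow> 0 \<le> c \<Longrightarrow> c *\<^sub>R x \<in> orth"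
  unfolding orth_def by auto

lemma orth_0: "0 \<in> orth" unfolding orth_def by auto

lemma np_add:
  assumes "x \<in> newton_polyhedron S" "w0 \<in> orth"
  shows "x + w0 \<in> newton_polyhedron S"
proof -
  let ?U = "\<Union>a\<in>S. (+) a ` orth"
  have "(+) w0 ` ?U \<subseteq> ?U"
  proof
    fix z assume "z \<in> (+) w0 ` ?U"
    then obtain a v where "a \<in> S" "v \<in> orth" "z = w0 + (a + v)" by auto
    then show "z \<in> ?U" using orth_add[OF assms(2), of v]
      by (auto intro!: bexI[of _ a] image_eqI[of _ _ "w0 + v"] simp: algebra_simps)
  qed
  hence "convex hull ((+) w0 ` ?U) \<subseteq> convex hull ?U" by (rule hull_mono)
  moreover have "w0 + x \<in> convex hull ((+) w0 ` ?U)"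
    using assms(1) unfolding np_alt convex_hull_translation by auto
  ultimately show ?thesis unfolding np_alt by (auto simp: add.commute)
qed

lemma np_gen: "a \<in> S \<Longrightarrow> w0 \<in> orth \<Longrightarrow> a + w0 \<in> newton_polyhedron S"
  unfolding np_alt by (rule hull_inc) auto

lemma np_convex: "convex (newton_polyhedron S)"
  unfolding np_alt by simp

lemma np_mono: "S \<subseteq> T \<Longrightarrow> newton_polyhedron S \<subseteq> newton_polyhedron T"
  unfolding np_alt by (rule hull_mono) auto

lemma np_valid:
  assumes "\<And>a. a \<in> S \<Longrightarrow> t \<le> c \<bullet> a" "\<And>i. 0 \<le> c $ i" "x \<in> newton_polyhedron S"
  shows "t \<le> c \<bullet> x"
proof -
  have "newton_polyhedron S \<subseteq> {x. c \<bullet> x \<ge> t}"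
    unfolding np_alt
  proof (rule hull_minimal)
    show "(\<Union>a\<in>S. (+) a ` orth) \<subseteq> {x. t \<le> c \<bullet> x}"
    proof
      fix z assume "z \<in> (\<Union>a\<in>S. (+) a ` orth)"
      then obtain a v where av: "a \<in> S" "v \<in> orth" "z = a + v" by auto
      have "0 \<le> c \<bullet> v" using av(2) assms(2) unfolding orth_def inner_vec_def
        by (auto intro!: sum_nonneg)
      then show "z \<in> {x. t \<le> c \<bullet> x}" using assms(1)[OF av(1)] av(3) by (simp add: inner_add_right)
    qed
  qed (rule convex_halfspace_ge)
  then show ?thesis using assms(3) by auto
qed

lemma conv2: "convex C \<Longrightarrow> a \<in> C \<Longrightarrow> b \<in> C \<Longrightarrow> 0 \<le> u \<Longrightarrow> 0 \<le> v \<Longrightarrow> u + v = 1 \<Longrightarrow> u *\<^sub>R a + v *\<^sub>R b \<in> C"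
  by (rule convexD)

lemma conv3: assumes "convex C" "a \<in> C" "b \<in> C" "c \<in> C" "0 \<le> u" "0 \<le> v" "0 \<le> w" "u + v + w = 1"
  shows "u *\<^sub>R a + v *\<^sub>R b + w *\<^sub>R c \<in> C"
proof -
  have "u *\<^sub>R a + v *\<^sub>R b + w *\<^sub>R c \<in> convex hull {a,b,c}"
    unfolding convex_hull_3 using assms by blast
  moreover have "convex hull {a,b,c} \<subseteq> C" using assms by (intro hull_minimal) auto
  ultimately show ?thesis by auto
qed

lemma conv4: assumes "convex C" "a \<in> C" "b \<in> C" "c \<in> C" "d \<in> C" "0 \<le> u" "0 \<le> v" "0 \<le> w" "0 \<le> z" "u + v + w + z = 1"
  shows "u *\<^sub>R a + v *\<^sub>R b + w *\<^sub>R c + z *\<^sub>R d \<in> C"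
proof (cases "z = 1")
  case True
  have u0: "u = 0" "v = 0" "w = 0" using assms(6-10) True by linarith+
  show ?thesis using u0 True assms(5) by simp
next
  case False
  then have z1: "1 - z > 0" using assms(6-10) by linarith
  have s1: "u/(1-z) + v/(1-z) + w/(1-z) = 1"
  proof -
    have "u/(1-z) + v/(1-z) + w/(1-z) = (u+v+w)/(1-z)" by (simp add: add_divide_distrib)
    also have "u+v+w = 1-z" using assms(10) by linarith
    finally show ?thesis using z1 by simp
  qed
  have "(u/(1-z)) *\<^sub>R a + (v/(1-z)) *\<^sub>R b + (w/(1-z)) *\<^sub>R c \<in> C"
    by (rule conv3[OF assms(1-4)]) (use assms(6-8) z1 s1 in simp_all)
  then have "(1-z) *\<^sub>R ((u/(1-z)) *\<^sub>R a + (v/(1-z)) *\<^sub>R b + (w/(1-z)) *\<^sub>R c) + z *\<^sub>R d \<in> C"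
    by (rule conv2[OF assms(1) _ assms(5)]) (use assms(9) z1 in simp_all)
  moreover have "(1-z) *\<^sub>R ((u/(1-z)) *\<^sub>R a + (v/(1-z)) *\<^sub>R b + (w/(1-z)) *\<^sub>R c) = u *\<^sub>R a + v *\<^sub>R b + w *\<^sub>R c"
    using z1 by (simp add: scaleR_add_right)
  ultimately show ?thesis by simp
qed

lemma v4[simp]: "(vector [a,b,c,d] :: real^4) $ 1 = a" "(vector [a,b,c,d] :: real^4) $ 2 = b"
 "(vector [a,b,c,d] :: real^4) $ 3 = c" "(vector [a,b,c,d] :: real^4) $ 4 = d"
  unfolding vector_def by simp_all

lemma vec4_eq: "(x::real^4) = y \<longleftrightarrow> x$1 = y$1 \<and> x$2 = y$2 \<and> x$3 = y$3 \<and> x$4 = y$4"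
  by (auto simp: vec_eq_iff forall_4)

lemma orth4: "(x::real^4) \<in> orth \<longleftrightarrow> 0 \<le> x$1 \<and> 0 \<le> x$2 \<and> 0 \<le> x$3 \<and> 0 \<le> x$4"
  by (auto simp: orth_def forall_4)

lemma inner4: "(x::real^4) \<bullet> y = x$1*y$1 + x$2*y$2 + x$3*y$3 + x$4*y$4"
  by (simp add: inner_vec_def sum_4)

abbreviation "vA \<equiv> vector [10,0,0,0] :: real^4"
abbreviation "vD2 \<equiv> vector [0,10,0,0] :: real^4"
abbreviation "vD3 \<equiv> vector [0,0,10,0] :: real^4"
abbreviation "vD4 \<equiv> vector [0,0,0,10] :: real^4"
abbreviation "vB2 \<equiv> vector [5,1,0,0] :: real^4"
abbreviation "vB3 \<equiv> vector [5,0,1,0] :: real^4"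
abbreviation "vB4 \<equiv> vector [5,0,0,1] :: real^4"
abbreviation "vC \<equiv> vector [0,1,1,0] :: real^4"
abbreviation "vE \<equiv> vector [0,0,1,1] :: real^4"
abbreviation "vW \<equiv> vector [9,0,0,0] :: real^4"
abbreviation "SF0 \<equiv> {vA, vD2, vD3, vD4, vB2, vB3, vB4, vC, vE}"
abbreviation "GF \<equiv> newton_polyhedron SF0"
abbreviation "GG \<equiv> newton_polyhedron (insert vW SF0)"

definition hh :: "real^4 \<Rightarrow> real" where "hh x = x$1 + 5*x$2 + 5*x$3 + 5*x$4"

lemma hh_inner: "hh x = vector [1,5,5,5] \<bullet> x" by (simp add: hh_def inner4)



lemma nonneg_vec4: "0 \<le> a \<Longrightarrow> 0 \<le> b \<Longrightarrow> 0 \<le> c \<Longrightarrow> 0 \<le> d \<Longrightarrow> 0 \<le> (vector [a,b,c,d]::real^4) $ i"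
  using exhaust_4[of i] by auto

lemma GF_h: "x \<in> GF \<Longrightarrow> 10 \<le> hh x"
proof -
  assume x: "x \<in> GF"
  have b: "\<forall>a\<in>SF0. 10 \<le> vector [1,5,5,5] \<bullet> a" by (simp add: inner4)
  show ?thesis unfolding hh_inner
    by (rule np_valid[OF _ _ x]) (use b in blast, rule nonneg_vec4, simp_all)
qed

lemma GG_q1: "x \<in> GG \<Longrightarrow> 9 \<le> x$1 + 4*x$2 + 5*x$3 + 4*x$4"
proof -
  assume x: "x \<in> GG"
  have b: "\<forall>a\<in>insert vW SF0. 9 \<le> vector [1,4,5,4] \<bullet> a" by (simp add: inner4)
  have "9 \<le> vector [1,4,5,4] \<bullet> x"
    by (rule np_valid[OF _ _ x]) (use b in blast, rule nonneg_vec4, simp_all)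
  then show ?thesis by (simp add: inner4)
qed

lemma GG_q2: "x \<in> GG \<Longrightarrow> 9 \<le> x$1 + 5*x$2 + 4*x$3 + 5*x$4"
proof -
  assume x: "x \<in> GG"
  have b: "\<forall>a\<in>insert vW SF0. 9 \<le> vector [1,5,4,5] \<bullet> a" by (simp add: inner4)
  have "9 \<le> vector [1,5,4,5] \<bullet> x"
    by (rule np_valid[OF _ _ x]) (use b in blast, rule nonneg_vec4, simp_all)
  then show ?thesis by (simp add: inner4)
qed

lemma hh_add: "hh (x + y) = hh x + hh y" by (simp add: hh_def)
lemma hh_scale: "hh (c *\<^sub>R x) = c * hh x" by (simp add: hh_def algebra_simps)
lemma hh_orth: "x \<in> orth \<Longrightarrow> 0 \<le> hh x" by (simp add: hh_def orth4)

lemma vA_GF: "vA \<in> GF"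
  using np_gen[of vA SF0 0] orth_0 by simp

lemma in_GF: "a \<in> SF0 \<Longrightarrow> a \<in> GF"
  using np_gen[of a SF0 0] orth_0 by simp


lemma lemM:
  assumes w: "w0 \<in> orth" and t: "0 \<le> t" "t \<le> hh w0"
  shows "\<exists>X\<in>GF. \<exists>r\<in>orth. w0 + t *\<^sub>R vW = t *\<^sub>R X + r"
proof (cases "t = 0")
  case True then show ?thesis using vA_GF w by auto
next
  case False
  define R where "R = w0$1 + 5*w0$2 + 5*w0$3 + 5*w0$4"
  have hR: "hh w0 = R" by (simp add: hh_def R_def)
  have R: "R > 0" using t False hR by auto
  have wc: "0 \<le> w0$1" "0 \<le> w0$2" "0 \<le> w0$3" "0 \<le> w0$4" using w by (auto simp: orth4)
  define X where "X = ((w0$1 + 4*(w0$2+w0$3+w0$4))/R) *\<^sub>R vA + (w0$2/R) *\<^sub>R vB2 + (w0$3/R) *\<^sub>R vB3 + (w0$4/R) *\<^sub>R vB4"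
  have s: "(w0$1 + 4*(w0$2+w0$3+w0$4))/R + w0$2/R + w0$3/R + w0$4/R = 1"
  proof -
    have "(w0$1 + 4*(w0$2+w0$3+w0$4))/R + w0$2/R + w0$3/R + w0$4/R = ((w0$1 + 4*(w0$2+w0$3+w0$4)) + w0$2 + w0$3 + w0$4)/R"
      by (simp add: add_divide_distrib)
    also have "(w0$1 + 4*(w0$2+w0$3+w0$4)) + w0$2 + w0$3 + w0$4 = R" by (simp add: R_def)
    finally show ?thesis using R by simp
  qed
  have "X \<in> GF" unfolding X_def
    by (rule conv4[OF np_convex]) (use R wc s in \<open>simp_all add: in_GF\<close>)
  define l where "l = t / R"
  have tl: "t = l * R" using R by (simp add: l_def)
  have l1: "l \<le> 1" using t hR R by (simp add: l_def)
  define Z where "Z = (w0$1 + 4*(w0$2+w0$3+w0$4)) *\<^sub>R vA + w0$2 *\<^sub>R vB2 + w0$3 *\<^sub>R vB3 + w0$4 *\<^sub>R vB4"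
  have RX: "R *\<^sub>R X = Z" using R by (simp add: X_def Z_def scaleR_add_right)
  have tX: "t *\<^sub>R X = l *\<^sub>R Z" unfolding tl RX[symmetric] by simp
  moreover have "(1 - l) *\<^sub>R w0 \<in> orth" using l1 w by (intro orth_scale) auto
  moreover have "w0 + t *\<^sub>R vW = l *\<^sub>R Z + (1 - l) *\<^sub>R w0"
    unfolding vec4_eq Z_def by (simp add: tl R_def algebra_simps)
  ultimately show ?thesis by (metis \<open>X \<in> GF\<close>)
qed

lemma SF0_h: "a \<in> SF0 \<Longrightarrow> hh a = 10 \<or> (hh a = 50 \<and> (a = vD2 \<or> a = vD3 \<or> a = vD4))"
  by (simp add: hh_def) (elim disjE; simp)

lemma lemY_D:
  assumes t: "0 \<le> t" "t \<le> 40" and dG: "d \<in> GF" "b \<in> GF"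
    and e: "d + t *\<^sub>R vW = ((40 - t)/40) *\<^sub>R d + (31*t/40) *\<^sub>R vA + (t/4) *\<^sub>R b"
  shows "(1/(1+t)) *\<^sub>R (d + t *\<^sub>R vW) \<in> GF"
proof -
  have s: "(1/(1+t)) * ((40 - t)/40) + (1/(1+t)) * (31*t/40) + (1/(1+t)) * (t/4) = 1"
  proof -
    have "(1/(1+t)) * ((40 - t)/40) + (1/(1+t)) * (31*t/40) + (1/(1+t)) * (t/4)
        = (1/(1+t)) * ((40 - t)/40 + 31*t/40 + t/4)" by (simp only: distrib_left)
    also have "(40 - t)/40 + 31*t/40 + t/4 = 1 + t" by (simp add: field_simps)
    also have "(1/(1+t)) * (1+t) = 1" using t by simp
    finally show ?thesis .
  qed
  have "((1/(1+t)) * ((40 - t)/40)) *\<^sub>R d + ((1/(1+t)) * (31*t/40)) *\<^sub>R vA + ((1/(1+t)) * (t/4)) *\<^sub>R b \<in> GF"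
    by (rule conv3[OF np_convex dG(1) vA_GF dG(2)]) (use t s in simp_all)
  moreover have "((1/(1+t)) * ((40 - t)/40)) *\<^sub>R d + ((1/(1+t)) * (31*t/40)) *\<^sub>R vA + ((1/(1+t)) * (t/4)) *\<^sub>R b
     = (1/(1+t)) *\<^sub>R (d + t *\<^sub>R vW)"
    unfolding e by (simp only: scaleR_add_right scaleR_scaleR)
  ultimately show ?thesis by simp
qed

lemma lemY:
  assumes a: "a \<in> SF0" and t: "0 \<le> t" "t \<le> hh a - 10"
  shows "(1/(1+t)) *\<^sub>R (a + t *\<^sub>R vW) \<in> GF"
proof -
  have t1: "1 + t \<noteq> 0" using t by auto
  from SF0_h[OF a] show ?thesis
  proof
    assume "hh a = 10"
    then have "t = 0" using t by auto
    then show ?thesis using in_GF[OF a] by simp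
  next
    assume h: "hh a = 50 \<and> (a = vD2 \<or> a = vD3 \<or> a = vD4)"
    then have t4: "t \<le> 40" using t by auto
    from h have "a = vD2 \<or> a = vD3 \<or> a = vD4" by simp
    then show ?thesis
    proof (elim disjE)
      assume a2: "a = vD2" show ?thesis unfolding a2
        by (rule lemY_D[where b=vB2, OF t(1) t4 in_GF in_GF]) (simp_all add: vec4_eq field_simps)
    next
      assume a2: "a = vD3" show ?thesis unfolding a2
        by (rule lemY_D[where b=vB3, OF t(1) t4 in_GF in_GF]) (simp_all add: vec4_eq field_simps)
    next
      assume a2: "a = vD4" show ?thesis unfolding a2
        by (rule lemY_D[where b=vB4, OF t(1) t4 in_GF in_GF]) (simp_all add: vec4_eq field_simps)
    qed
  qed
qed


lemma hh_comb: "hh (u *\<^sub>R p + v *\<^sub>R q) = u * hh p + v * hh q"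
  by (simp add: hh_add hh_scale)

lemma lemL:
  assumes p: "p \<in> GF" and t: "0 \<le> t" "t \<le> hh p - 10"
  shows "(1/(1+t)) *\<^sub>R (p + t *\<^sub>R vW) \<in> GF"
proof -
  define C where "C = {p \<in> GF. \<forall>t. 0 \<le> t \<and> t \<le> hh p - 10 \<longrightarrow> (1/(1+t)) *\<^sub>R (p + t *\<^sub>R vW) \<in> GF}"
  have "GF \<subseteq> C" unfolding np_alt[of SF0]
  proof (rule hull_minimal)
    show "(\<Union>a\<in>SF0. (+) a ` orth) \<subseteq> C"
    proof
      fix z assume "z \<in> (\<Union>a\<in>SF0. (+) a ` orth)"
      then obtain a v where av: "a \<in> SF0" "v \<in> orth" "z = a + v" by auto
      have zG: "z \<in> GF" using np_gen[OF av(1,2)] av(3) by simp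
      have ha: "10 \<le> hh a" using SF0_h[OF av(1)] by auto
      have hv: "0 \<le> hh v" using hh_orth[OF av(2)] .
      have "(1/(1+t)) *\<^sub>R (z + t *\<^sub>R vW) \<in> GF" if t: "0 \<le> t" "t \<le> hh z - 10" for t
      proof -
        define ta where "ta = min t (hh a - 10)"
        define to where "to = t - ta"
        have ta: "0 \<le> ta" "ta \<le> hh a - 10" using t ha by (auto simp: ta_def)
        have to: "0 \<le> to" "to \<le> hh v" using t ha hv av(3) by (auto simp: ta_def to_def hh_add min_def)
        define Y where "Y = (1/(1+ta)) *\<^sub>R (a + ta *\<^sub>R vW)"
        have YG: "Y \<in> GF" unfolding Y_def by (rule lemY[OF av(1) ta])
        have eY: "(1+ta) *\<^sub>R Y = a + ta *\<^sub>R vW" using ta by (simp add: Y_def)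
        obtain X r where X: "X \<in> GF" "r \<in> orth" "v + to *\<^sub>R vW = to *\<^sub>R X + r"
          using lemM[OF av(2) to] by blast
        have t1: "0 < 1 + t" using t by simp
        have m: "((1+ta)/(1+t)) *\<^sub>R Y + (to/(1+t)) *\<^sub>R X \<in> GF"
        proof (rule conv2[OF np_convex YG X(1)])
          show "0 \<le> (1+ta)/(1+t)" using ta t1 by simp
          show "0 \<le> to/(1+t)" using to t1 by simp
          have "(1+ta)/(1+t) + to/(1+t) = (1 + ta + to)/(1+t)" by (simp add: add_divide_distrib)
          also have "1 + ta + to = 1 + t" by (simp add: to_def)
          also have "(1+t)/(1+t) = 1" using t1 by simp
          finally show "(1+ta)/(1+t) + to/(1+t) = 1" .
        qed
        have r': "(1/(1+t)) *\<^sub>R r \<in> orth" using X(2) t1 by (intro orth_scale) auto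
        have e1: "z + t *\<^sub>R vW = (1+ta) *\<^sub>R Y + (to *\<^sub>R X + r)"
        proof -
          have "z + t *\<^sub>R vW = (a + ta *\<^sub>R vW) + (v + to *\<^sub>R vW)"
            using av(3) by (simp add: to_def algebra_simps)
          also have "\<dots> = (1+ta) *\<^sub>R Y + (to *\<^sub>R X + r)" by (simp add: eY X(3))
          finally show ?thesis .
        qed
        have "(1/(1+t)) *\<^sub>R (z + t *\<^sub>R vW) = (((1+ta)/(1+t)) *\<^sub>R Y + (to/(1+t)) *\<^sub>R X) + (1/(1+t)) *\<^sub>R r"
          unfolding e1 by (simp add: scaleR_add_right)
        then show ?thesis using np_add[OF m r'] by simp
      qed
      then show "z \<in> C" using zG by (auto simp: C_def)
    qed
  next
    show "convex C" unfolding convex_def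
    proof (intro ballI allI impI)
      fix p1 p2 and u v :: real assume p1: "p1 \<in> C" and p2: "p2 \<in> C" and uv: "0 \<le> u" "0 \<le> v" "u + v = 1"
      have p1G: "p1 \<in> GF" and p2G: "p2 \<in> GF" using p1 p2 by (auto simp: C_def)
      have pG: "u *\<^sub>R p1 + v *\<^sub>R p2 \<in> GF" by (rule conv2[OF np_convex p1G p2G uv])
      define e1 where "e1 = hh p1 - 10"
      define e2 where "e2 = hh p2 - 10"
      have e: "0 \<le> e1" "0 \<le> e2" using GF_h[OF p1G] GF_h[OF p2G] by (auto simp: e1_def e2_def)
      have hp: "hh (u *\<^sub>R p1 + v *\<^sub>R p2) - 10 = u * e1 + v * e2"
        using uv by (simp add: hh_comb e1_def e2_def algebra_simps)
      have "(1/(1+t)) *\<^sub>R ((u *\<^sub>R p1 + v *\<^sub>R p2) + t *\<^sub>R vW) \<in> GF"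
        if t: "0 \<le> t" "t \<le> u * e1 + v * e2" for t
      proof (cases "u * e1 + v * e2 = 0")
        case True
        then have "t = 0" using t by simp
        then show ?thesis using pG by simp
      next
        case False
        define E where "E = u * e1 + v * e2"
        have "0 \<le> u * e1" "0 \<le> v * e2" using e uv by simp_all
        then have E: "0 < E" using False unfolding E_def by linarith
        define t1 where "t1 = t * e1 / E"
        define t2 where "t2 = t * e2 / E"
        have tE: "t / E \<le> 1" using t E by (simp add: E_def)
        have t1b: "0 \<le> t1" "t1 \<le> e1"
          using t e E tE mult_right_mono[OF tE e(1)] by (auto simp: t1_def)
        have t2b: "0 \<le> t2" "t2 \<le> e2"
          using t e E tE mult_right_mono[OF tE e(2)] by (auto simp: t2_def)
        have ut: "u * t1 + v * t2 = t"
        proof -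
          have t1E: "t1 * E = t * e1" using E by (simp add: t1_def)
          have t2E: "t2 * E = t * e2" using E by (simp add: t2_def)
          have "(u * t1 + v * t2) * E = u * (t1 * E) + v * (t2 * E)" by (simp add: algebra_simps)
          also have "\<dots> = u * (t * e1) + v * (t * e2)" by (simp only: t1E t2E)
          also have "\<dots> = t * E" by (simp add: E_def algebra_simps)
          finally show ?thesis using E by simp
        qed
        define Y1 where "Y1 = (1/(1+t1)) *\<^sub>R (p1 + t1 *\<^sub>R vW)"
        define Y2 where "Y2 = (1/(1+t2)) *\<^sub>R (p2 + t2 *\<^sub>R vW)"
        have Y1G: "Y1 \<in> GF" using p1 t1b by (auto simp: C_def Y1_def e1_def)
        have Y2G: "Y2 \<in> GF" using p2 t2b by (auto simp: C_def Y2_def e2_def)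
        have eY1: "(1+t1) *\<^sub>R Y1 = p1 + t1 *\<^sub>R vW" using t1b by (simp add: Y1_def)
        have eY2: "(1+t2) *\<^sub>R Y2 = p2 + t2 *\<^sub>R vW" using t2b by (simp add: Y2_def)
        have tp: "0 < 1 + t" using t by simp
        have w: "(u * (1+t1)/(1+t)) + (v * (1+t2)/(1+t)) = 1"
        proof -
          have "(u * (1+t1)/(1+t)) + (v * (1+t2)/(1+t)) = (u * (1+t1) + v * (1+t2))/(1+t)" by (simp add: add_divide_distrib)
          also have "u * (1+t1) + v * (1+t2) = 1 + t" using uv ut by (simp add: algebra_simps)
          also have "(1+t)/(1+t) = 1" using tp by simp
          finally show ?thesis .
        qed
        have "(u * (1+t1)/(1+t)) *\<^sub>R Y1 + (v * (1+t2)/(1+t)) *\<^sub>R Y2 \<in> GF"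
          by (rule conv2[OF np_convex Y1G Y2G]) (use uv t1b t2b tp w in simp_all)
        moreover have "(u * (1+t1)/(1+t)) *\<^sub>R Y1 + (v * (1+t2)/(1+t)) *\<^sub>R Y2
            = (1/(1+t)) *\<^sub>R ((u *\<^sub>R p1 + v *\<^sub>R p2) + t *\<^sub>R vW)"
        proof -
          have "(u * (1+t1)/(1+t)) *\<^sub>R Y1 + (v * (1+t2)/(1+t)) *\<^sub>R Y2
              = (1/(1+t)) *\<^sub>R (u *\<^sub>R ((1+t1) *\<^sub>R Y1) + v *\<^sub>R ((1+t2) *\<^sub>R Y2))"
            by (simp add: scaleR_add_right)
          also have "\<dots> = (1/(1+t)) *\<^sub>R ((u *\<^sub>R p1 + v *\<^sub>R p2) + (u * t1 + v * t2) *\<^sub>R vW)"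
            unfolding eY1 eY2 by (simp add: algebra_simps)
          finally show ?thesis unfolding ut .
        qed
        ultimately show ?thesis by simp
      qed
      then show "u *\<^sub>R p1 + v *\<^sub>R p2 \<in> C" using pG hp by (auto simp: C_def)
    qed
  qed
  then show ?thesis using p t by (auto simp: C_def)
qed


lemma GF_sub_GG: "GF \<subseteq> GG" by (rule np_mono) auto

lemma vW_GG: "vW \<in> GG" using np_gen[of vW "insert vW SF0" 0] orth_0 by simp

lemma lemIV:
  assumes x: "x \<in> GG" and h: "10 \<le> hh x"
  shows "x \<in> GF"
proof -
  have U: "(\<Union>a\<in>insert vW SF0. (+) a ` orth) \<subseteq> (+) vW ` orth \<union> GF"
    using hull_subset[of "\<Union>a\<in>SF0. (+) a ` orth" convex] unfolding np_alt by auto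
  have ne1: "(+) vW ` orth \<noteq> {}" using orth_0 by auto
  have ne2: "GF \<noteq> {}" using vA_GF by auto
  have "x \<in> convex hull ((+) vW ` orth \<union> GF)"
    using x hull_mono[OF U, of convex] unfolding np_alt[of "insert vW SF0"] by auto
  then obtain u v s q where uv: "0 \<le> u" "0 \<le> v" "u + v = 1" and s: "s \<in> (+) vW ` orth"
      and q: "q \<in> GF" and xe: "x = u *\<^sub>R s + v *\<^sub>R q"
    unfolding convex_hull_union_two[OF convex_translation[OF convex_orth] ne1 np_convex ne2] by blast
  obtain w where w: "w \<in> orth" and sw: "s = vW + w" using s by auto
  have hW: "hh vW = 9" by (simp add: hh_def)
  show ?thesis
  proof (cases "v = 0")
    case True
    then have xs: "x = vW + w" using uv xe sw by simp
    have "1 \<le> hh w" using h xs hW by (simp add: hh_add)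
    then have "\<exists>X\<in>GF. \<exists>r\<in>orth. w + 1 *\<^sub>R vW = 1 *\<^sub>R X + r"
      using lemM[OF w, of 1] by simp
    then obtain X r where "X \<in> GF" "r \<in> orth" "w + 1 *\<^sub>R vW = 1 *\<^sub>R X + r"
      by blast
    then show ?thesis using xs np_add[of X SF0 r] by (simp add: add.commute)
  next
    case False
    then have v0: "0 < v" using uv by simp
    show ?thesis
    proof (cases "u = 0")
      case True
      then show ?thesis using xe uv q by simp
    next
      case False
      then have u0: "0 < u" using uv by simp
      define p' where "p' = q + (u/v) *\<^sub>R w"
      have p'G: "p' \<in> GF" unfolding p'_def using v0 u0 by (intro np_add q orth_scale w) simp
      define t where "t = u / v"
      have tp: "0 \<le> t" using u0 v0 by (simp add: t_def)
      have hx: "hh x = 9 * u + v * hh p'"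
        using xe sw v0 by (simp add: hh_add hh_scale hW p'_def algebra_simps)
      have "u \<le> v * (hh p' - 10)" using hx h uv by (simp add: algebra_simps)
      then have tb: "t \<le> hh p' - 10" using v0 by (simp add: t_def field_simps)
      have "(1/(1+t)) *\<^sub>R (p' + t *\<^sub>R vW) \<in> GF" by (rule lemL[OF p'G tp tb])
      moreover have "(1/(1+t)) *\<^sub>R (p' + t *\<^sub>R vW) = x"
      proof -
        have "1/(1+t) = v" using v0 uv by (simp add: t_def field_simps)
        then have "(1/(1+t)) *\<^sub>R (p' + t *\<^sub>R vW) = v *\<^sub>R q + u *\<^sub>R w + u *\<^sub>R vW"
          using v0 by (simp add: p'_def t_def scaleR_add_right)
        then show ?thesis using xe sw by (simp add: algebra_simps)
      qed
      ultimately show ?thesis by simp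
    qed
  qed
qed

lemma lemIII:
  assumes x: "x \<in> orth" and h1: "9 + max (x$2+x$4) (x$3) \<le> hh x" and h2: "hh x < 10"
  shows "x \<in> GG"
proof -
  define g where "g = max (x$2+x$4) (x$3)"
  have xc: "0 \<le> x$1" "0 \<le> x$2" "0 \<le> x$3" "0 \<le> x$4" using x by (auto simp: orth4)
  have g0: "0 \<le> g" using xc by (simp add: g_def)
  have g1: "g \<le> 1" using h1 h2 unfolding g_def by linarith
  show ?thesis
  proof (cases "g = 0")
    case True
    then have z: "x$2 = 0" "x$3 = 0" "x$4 = 0" using xc by (auto simp: g_def max_def split: if_splits)
    have "x$1 \<ge> 9" using h1 z by (simp add: hh_def)
    then have "x - vW \<in> orth" using z by (simp add: orth4)
    then have "vW + (x - vW) \<in> GG" by (intro np_gen) auto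
    then show ?thesis by simp
  next
    case False
    then have gp: "0 < g" using g0 by simp
    define y2 where "y2 = x$2 / g"
    define y3 where "y3 = x$3 / g"
    define y4 where "y4 = x$4 / g"
    have yc: "0 \<le> y2" "0 \<le> y3" "0 \<le> y4" using xc gp by (auto simp: y2_def y3_def y4_def)
    have y24: "y2 + y4 \<le> 1"
    proof -
      have "y2 + y4 = (x$2 + x$4)/g" by (simp add: y2_def y4_def add_divide_distrib)
      also have "\<dots> \<le> 1" using gp by (simp add: g_def)
      finally show ?thesis .
    qed
    have y3b: "y3 \<le> 1" using gp by (simp add: y3_def g_def)
    define P1 where "P1 = (1 - y2 - y4) *\<^sub>R vA + y2 *\<^sub>R vB2 + y4 *\<^sub>R vB4"
    define P2 where "P2 = (1 - y2 - y4) *\<^sub>R vB3 + y2 *\<^sub>R vC + y4 *\<^sub>R vE"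
    have P1G: "P1 \<in> GF" unfolding P1_def
      by (rule conv3[OF np_convex in_GF in_GF in_GF]) (use yc y24 in simp_all)
    have P2G: "P2 \<in> GF" unfolding P2_def
      by (rule conv3[OF np_convex in_GF in_GF in_GF]) (use yc y24 in simp_all)
    define Fp where "Fp = (1 - y3) *\<^sub>R P1 + y3 *\<^sub>R P2"
    have FG: "Fp \<in> GG" unfolding Fp_def
      using conv2[OF np_convex P1G P2G, of "1 - y3" y3] yc y3b GF_sub_GG by auto
    define Q where "Q = (1 - g) *\<^sub>R vW + g *\<^sub>R Fp"
    have QG: "Q \<in> GG" unfolding Q_def by (rule conv2[OF np_convex vW_GG FG]) (use g0 g1 in simp_all)
    have Q1: "Q$1 = 9 + g - 5*(x$2+x$3+x$4)"
      using gp by (simp add: Q_def Fp_def P1_def P2_def y2_def y3_def y4_def field_simps)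
    have Q2: "Q$2 = x$2" "Q$3 = x$3" "Q$4 = x$4"
      using gp by (simp_all add: Q_def Fp_def P1_def P2_def y2_def y3_def y4_def field_simps)
    have "x - Q \<in> orth" using Q1 Q2 h1 by (simp add: orth4 hh_def g_def)
    from np_add[OF QG this] show ?thesis by simp
  qed
qed

definition Dc :: "real^4 \<Rightarrow> bool" where
  "Dc x \<longleftrightarrow> 9 + max (x$2+x$4) (x$3) \<le> hh x \<and> hh x < 10"

lemma char: "x \<in> orth \<Longrightarrow> (x \<in> GG \<and> x \<notin> GF) \<longleftrightarrow> Dc x"
proof
  assume x: "x \<in> orth" and a: "x \<in> GG \<and> x \<notin> GF"
  have "hh x < 10" using lemIV a by force
  moreover have "9 + max (x$2+x$4) (x$3) \<le> hh x"
    using GG_q1[of x] GG_q2[of x] a by (simp add: hh_def max_def)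
  ultimately show "Dc x" by (simp add: Dc_def)
next
  assume x: "x \<in> orth" and d: "Dc x"
  then show "x \<in> GG \<and> x \<notin> GF" using lemIII[OF x] GF_h[of x] by (auto simp: Dc_def)
qed

lemma strict: "GF \<subset> GG"
proof -
  have "vW \<notin> GF" using GF_h[of vW] by (auto simp: hh_def)
  then show ?thesis using GF_sub_GG vW_GG by blast
qed


lemma orth_closed: "closed (orth :: (real^'n) set)"
  unfolding orth_def
proof (rule closed_Collect_all)
  fix i show "closed {x::real^'n. 0 \<le> x $ i}"
    by (rule closed_Collect_le) (intro continuous_intros)+
qed

lemma np_eq_sum: fixes S :: "(real^'n) set"
  shows "newton_polyhedron S = (\<Union>x\<in>orth. \<Union>y\<in>convex hull S. {x + y})"
proof (rule equalityI)
  show "newton_polyhedron S \<subseteq> (\<Union>x\<in>orth. \<Union>y\<in>convex hull S. {x + y})"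
    unfolding np_alt
  proof (rule hull_minimal)
    show "(\<Union>a\<in>S. (+) a ` orth) \<subseteq> (\<Union>x\<in>orth. \<Union>y\<in>convex hull S. {x + y})"
    proof safe
      fix a v :: "real^'n" assume a: "a \<in> S" and v: "v \<in> orth"
      show "a + v \<in> (\<Union>x\<in>orth. \<Union>y\<in>convex hull S. {x + y})"
        by (rule UN_I[OF v], rule UN_I[OF hull_inc[OF a]]) (simp add: add.commute)
    qed
    show "convex (\<Union>x\<in>orth. \<Union>y\<in>convex hull S. {x + y})"
      by (rule convex_sums[OF convex_orth convex_convex_hull])
  qed
  show "(\<Union>x\<in>orth. \<Union>y\<in>convex hull S. {x + y}) \<subseteq> newton_polyhedron S"
  proof safe
    fix x y :: "real^'n" assume v: "x \<in> orth" and y: "y \<in> convex hull S"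
    have "S \<subseteq> (\<Union>a\<in>S. (+) a ` orth)" using orth_0 by force
    then have "convex hull S \<subseteq> newton_polyhedron S" unfolding np_alt by (rule hull_mono)
    then have "y + x \<in> newton_polyhedron S" using y v np_add by blast
    then show "x + y \<in> newton_polyhedron S" by (simp add: add.commute)
  qed
qed

lemma np_closed: "finite S \<Longrightarrow> closed (newton_polyhedron (S :: (real^'n) set))"
  unfolding np_eq_sum
  by (intro closed_compact_sums orth_closed compact_convex_hull finite_imp_compact)

lemma GF_closed: "closed GF" by (rule np_closed) simp
lemma GG_closed: "closed GG" by (rule np_closed) simp

lemma big_GF: assumes x: "x \<in> orth" and i: "10 \<le> x$i" shows "x \<in> GF"
proof -
  have xc: "0 \<le> x$1" "0 \<le> x$2" "0 \<le> x$3" "0 \<le> x$4" using x by (auto simp: orth4)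
  have *: "x \<in> GF" if "a \<in> SF0" "x - a \<in> orth" for a
    using np_gen[OF that] by simp
  from exhaust_4[of i] show ?thesis
  proof (elim disjE)
    assume "i = 1" then show ?thesis using i xc by (intro *[of vA]) (auto simp: orth4)
  next
    assume "i = 2" then show ?thesis using i xc by (intro *[of vD2]) (auto simp: orth4)
  next
    assume "i = 3" then show ?thesis using i xc by (intro *[of vD3]) (auto simp: orth4)
  next
    assume "i = 4" then show ?thesis using i xc by (intro *[of vD4]) (auto simp: orth4)
  qed
qed

interpretation PS: product_sigma_finite "\<lambda>_::4. (lborel :: real measure)" by standard

abbreviation "MM J \<equiv> PiM J (\<lambda>_::4. (lborel :: real measure))"

definition Rset :: "4 set \<Rightarrow> (real^4) set \<Rightarrow> (4 \<Rightarrow> real) set" where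
  "Rset J \<Gamma> = {y \<in> PiE J (\<lambda>_. UNIV). (\<forall>j\<in>J. 0 \<le> y j) \<and> zero_ext J y \<notin> \<Gamma>}"

definition Dset :: "4 set \<Rightarrow> (4 \<Rightarrow> real) set" where
  "Dset J = {y \<in> PiE J (\<lambda>_. UNIV). (\<forall>j\<in>J. 0 \<le> y j) \<and> Dc (zero_ext J y)}"

lemma vol_Rset: "vol_compl J \<Gamma> = measure (MM J) (Rset J \<Gamma>)"
  unfolding vol_compl_def Rset_def by simp

lemma zero_ext_nth: "zero_ext J y $ i = (if i \<in> J then y i else 0)"
  by (simp add: zero_ext_def)

lemma zero_ext_orth: "(\<forall>j\<in>J. 0 \<le> y j) \<Longrightarrow> zero_ext J y \<in> orth"
  by (auto simp: orth_def zero_ext_nth)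

lemma zero_ext_meas: "zero_ext J \<in> borel_measurable (MM J)"
proof (subst borel_measurable_euclidean_space, intro ballI)
  fix b :: "real^4" assume "b \<in> Basis"
  then obtain k where b: "b = axis k 1" by (auto simp: Basis_vec_def)
  have e: "(\<lambda>x. zero_ext J x \<bullet> b) = (\<lambda>x. if k \<in> J then x k else 0)"
    by (auto simp: b inner_axis zero_ext_nth)
  show "(\<lambda>x. zero_ext J x \<bullet> b) \<in> borel_measurable (MM J)"
    unfolding e by (cases "k \<in> J") (auto intro!: measurable_component_singleton)
qed

lemma space_MM: "space (MM J) = PiE J (\<lambda>_. UNIV)" by (simp add: space_PiM)

lemma pre_sets: "A \<in> sets borel \<Longrightarrow> PiE J (\<lambda>_. {0..}) \<inter> (zero_ext J -` A \<inter> space (MM J)) \<in> sets (MM J)"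
  by (intro sets.Int sets_PiM_I_finite measurable_sets[OF zero_ext_meas]) auto

lemma Rset_sets: assumes "closed \<Gamma>" shows "Rset J \<Gamma> \<in> sets (MM J)"
proof -
  have "Rset J \<Gamma> = PiE J (\<lambda>_. {0..}) \<inter> (zero_ext J -` (- \<Gamma>) \<inter> space (MM J))"
    by (auto simp: Rset_def space_MM PiE_def Pi_def)
  also have "\<dots> \<in> sets (MM J)" using assms by (intro pre_sets borel_open) auto
  finally show ?thesis .
qed

lemma Dc_sets: "{x. Dc x} \<in> sets borel"
proof -
  have "{x. Dc x} = {x. 9 + max (x$2+x$4) (x$3) \<le> hh x} \<inter> {x. hh x < 10}"
    by (auto simp: Dc_def)
  moreover have "closed {x::real^4. 9 + max (x$2+x$4) (x$3) \<le> hh x}"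
    unfolding hh_def by (intro closed_Collect_le continuous_intros)
  moreover have "open {x::real^4. hh x < 10}"
    unfolding hh_def by (intro open_Collect_less continuous_intros)
  ultimately show ?thesis by (auto intro: borel_closed borel_open)
qed

lemma Dset_sets: "Dset J \<in> sets (MM J)"
proof -
  have "Dset J = PiE J (\<lambda>_. {0..}) \<inter> (zero_ext J -` {x. Dc x} \<inter> space (MM J))"
    by (auto simp: Dset_def space_MM PiE_def Pi_def)
  also have "\<dots> \<in> sets (MM J)" using Dc_sets by (intro pre_sets)
  finally show ?thesis .
qed

lemma Rset_bound: assumes "\<Gamma> = GF \<or> \<Gamma> = GG" shows "Rset J \<Gamma> \<subseteq> PiE J (\<lambda>_. {0..10})"
proof
  fix y assume y: "y \<in> Rset J \<Gamma>"
  have "y j \<in> {0..10}" if j: "j \<in> J" for j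
  proof (rule ccontr)
    assume "y j \<notin> {0..10}"
    then have "10 \<le> zero_ext J y $ j" using y j by (auto simp: Rset_def zero_ext_nth)
    then have "zero_ext J y \<in> GF" using y by (intro big_GF zero_ext_orth) (auto simp: Rset_def)
    then show False using y assms GF_sub_GG by (auto simp: Rset_def)
  qed
  then show "y \<in> PiE J (\<lambda>_. {0..10})" using y by (auto simp: Rset_def PiE_def Pi_def)
qed

lemma Rset_fin: assumes "\<Gamma> = GF \<or> \<Gamma> = GG" shows "emeasure (MM J) (Rset J \<Gamma>) \<noteq> \<infinity>"
proof -
  have "emeasure (MM J) (Rset J \<Gamma>) \<le> emeasure (MM J) (PiE J (\<lambda>_. {0..10}))"
    by (rule emeasure_mono[OF Rset_bound[OF assms]]) auto
  also have "\<dots> = (\<Prod>i\<in>J. emeasure lborel {0..(10::real)})"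
    by (rule PS.emeasure_PiM) auto
  also have "\<dots> < \<infinity>" by (simp add: prod_constant power_eq_top_ennreal top.not_eq_extremum[symmetric])
  finally show ?thesis by simp
qed

lemma vol_diff: "vol_compl J GF - vol_compl J GG = measure (MM J) (Dset J)"
proof -
  have sub: "Rset J GG \<subseteq> Rset J GF" using GF_sub_GG by (auto simp: Rset_def)
  have eq: "Rset J GF - Rset J GG = Dset J"
    using char[OF zero_ext_orth] by (auto simp: Rset_def Dset_def)
  have "measure (MM J) (Rset J GF - Rset J GG) = measure (MM J) (Rset J GF) - measure (MM J) (Rset J GG)"
    by (rule measure_Diff[OF Rset_fin Rset_sets[OF GF_closed] Rset_sets[OF GG_closed] sub]) simp
  then show ?thesis unfolding vol_Rset eq by simp
qed

lemma Dset_no1: assumes "1 \<notin> J" shows "Dset J = {}"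
proof -
  have False if y: "y \<in> Dset J" for y
  proof -
    let ?x = "zero_ext J y"
    have o: "?x \<in> orth" using y by (intro zero_ext_orth) (auto simp: Dset_def)
    have c: "0 \<le> ?x$2" "0 \<le> ?x$3" "0 \<le> ?x$4" using o by (auto simp: orth4)
    have x1: "?x$1 = 0" using assms by (simp add: zero_ext_nth)
    have d: "Dc ?x" using y by (auto simp: Dset_def)
    have "?x$2 + ?x$4 \<le> max (?x$2 + ?x$4) (?x$3)" "?x$3 \<le> max (?x$2 + ?x$4) (?x$3)" by simp_all
    then show False using d c x1 unfolding Dc_def hh_def by linarith
  qed
  then show ?thesis by blast
qed


lemma ftc:
  fixes f F :: "real \<Rightarrow> real"
  assumes "a \<le> c" "\<And>x. DERIV F x :> f x" "\<And>x. x \<in> {a..c} \<Longrightarrow> 0 \<le> f x"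
    "f \<in> borel_measurable borel"
  shows "(\<integral>\<^sup>+x. ennreal (f x) * indicator {a..c} x \<partial>lborel) = ennreal (F c - F a)"
  using nn_integral_FTC_Icc[of f a c F] assms by auto

lemma La: assumes b: "0 \<le> b"
  shows "(\<integral>\<^sup>+t. indicator {0..} t * ennreal (1 - (t + b)) \<partial>lborel) = ennreal ((max 0 (1 - b))^2 / 2)"
proof (cases "b \<le> 1")
  case True
  have "(\<integral>\<^sup>+t. indicator {0..} t * ennreal (1 - (t + b)) \<partial>lborel)
      = (\<integral>\<^sup>+t. ennreal (1 - b - t) * indicator {0..1-b} t \<partial>lborel)"
    by (intro nn_integral_cong) (auto simp: indicator_def ennreal_neg algebra_simps)
  also have "\<dots> = ennreal ((-((1-b-(1-b))^2/2)) - (-((1-b-0)^2/2)))"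
    by (rule ftc[where F="\<lambda>t. -((1-b-t)^2/2)"]) (use True in \<open>auto intro!: derivative_eq_intros simp: field_simps\<close>)
  also have "(-((1-b-(1-b))^2/2)) - (-((1-b-0)^2/2)) = (max 0 (1 - b))^2 / 2"
    using True by (simp add: max_def)
  finally show ?thesis .
next
  case False
  have "(\<integral>\<^sup>+t. indicator {0..} t * ennreal (1 - (t + b)) \<partial>lborel) = (\<integral>\<^sup>+t. 0 \<partial>(lborel::real measure))"
    using False by (intro nn_integral_cong) (auto simp: indicator_def ennreal_neg)
  then show ?thesis using False by (simp add: max_def)
qed

lemma Lb: assumes b: "0 \<le> b"
  shows "(\<integral>\<^sup>+t. indicator {0..} t * ennreal (1 - max b t) \<partial>lborel) = ennreal (max 0 ((1 - b^2)/2))"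
proof (cases "b \<le> 1")
  case True
  have "(\<integral>\<^sup>+t. indicator {0..} t * ennreal (1 - max b t) \<partial>lborel)
      = (\<integral>\<^sup>+t. ennreal (1 - b) * indicator {0..<b} t + ennreal (1 - t) * indicator {b..1} t \<partial>lborel)"
    using b by (intro nn_integral_cong) (auto simp: indicator_def ennreal_neg max_def)
  also have "\<dots> = (\<integral>\<^sup>+t. ennreal (1 - b) * indicator {0..<b} t \<partial>lborel) + (\<integral>\<^sup>+t. ennreal (1 - t) * indicator {b..1} t \<partial>lborel)"
    by (rule nn_integral_add) auto
  also have "(\<integral>\<^sup>+t. ennreal (1 - b) * indicator {0..<b} t \<partial>lborel) = ennreal (1 - b) * ennreal b"
    using b by (simp add: nn_integral_cmult_indicator)
  also have "(\<integral>\<^sup>+t. ennreal (1 - t) * indicator {b..1} t \<partial>lborel) = ennreal ((1 - 1^2/2) - (b - b^2/2))"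
    by (rule ftc[where F="\<lambda>t. t - t^2/2"]) (use True in \<open>auto intro!: derivative_eq_intros\<close>)
  also have "ennreal (1 - b) * ennreal b + ennreal ((1 - 1^2/2) - (b - b^2/2)) = ennreal ((1 - b) * b + (1-b)^2/2)"
  proof -
    have e1: "ennreal (1 - b) * ennreal b = ennreal ((1-b)*b)" using True b by (simp add: ennreal_mult)
    have e2: "(1 - 1^2/2) - (b - b^2/2) = (1-b)^2/2" by (simp add: power2_eq_square field_simps)
    have "ennreal ((1-b)*b) + ennreal ((1-b)^2/2) = ennreal ((1-b)*b + (1-b)^2/2)"
      using True b by (intro ennreal_plus[symmetric]) auto
    then show ?thesis unfolding e1 e2 .
  qed
  also have "(1 - b) * b + (1-b)^2/2 = max 0 ((1 - b^2)/2)"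
  proof -
    have "b^2 \<le> 1" using True b by (simp add: power_le_one)
    then show ?thesis by (simp add: max_def power2_eq_square field_simps)
  qed
  finally show ?thesis .
next
  case False
  have "(\<integral>\<^sup>+t. indicator {0..} t * ennreal (1 - max b t) \<partial>lborel) = (\<integral>\<^sup>+t. 0 \<partial>(lborel::real measure))"
    using False by (intro nn_integral_cong) (auto simp: indicator_def ennreal_neg max_def)
  moreover have "max 0 ((1 - b^2)/2) = 0"
  proof -
    have "1 < b^2" using False by (simp add: one_less_power)
    then show ?thesis by (simp add: max_def)
  qed
  ultimately show ?thesis by simp
qed

lemma Lc: assumes b: "0 \<le> b"
  shows "(\<integral>\<^sup>+t. indicator {0..} t * ennreal ((1 - (t + b)^2)/2) \<partial>lborel) = ennreal (if b \<le> 1 then (1-b)^2*(2+b)/6 else 0)"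
proof (cases "b \<le> 1")
  case True
  have sq: "(1 - (t + b)^2)/2 \<le> 0" if "1 < t + b" for t
  proof -
    have "1 < (t+b)^2" using that by (simp add: one_less_power)
    then show ?thesis by simp
  qed
  have "(\<integral>\<^sup>+t. indicator {0..} t * ennreal ((1 - (t + b)^2)/2) \<partial>lborel)
      = (\<integral>\<^sup>+t. ennreal ((1 - (t + b)^2)/2) * indicator {0..1-b} t \<partial>lborel)"
    by (intro nn_integral_cong) (use sq in \<open>auto simp: indicator_def ennreal_neg\<close>)
  also have "\<dots> = ennreal ((((1-b)+b) - ((1-b)+b)^3/3)/2 - ((0+b) - (0+b)^3/3)/2)"
  proof (rule ftc[where F="\<lambda>t. ((t+b) - (t+b)^3/3)/2"])
    show "0 \<le> 1 - b" using True by simp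
    show "DERIV (\<lambda>t. ((t+b) - (t+b)^3/3)/2) x :> (1 - (x + b)^2)/2" for x :: real
      by (auto intro!: derivative_eq_intros simp: field_simps power2_eq_square)
    show "0 \<le> (1 - (x + b)^2)/2" if "x \<in> {0..1-b}" for x :: real
    proof -
      have "(x+b)^2 \<le> 1^2" using that b by (intro power_mono) auto
      then show ?thesis by simp
    qed
  qed auto
  also have "(((1-b)+b) - ((1-b)+b)^3/3)/2 - ((0+b) - (0+b)^3/3)/2 = (if b \<le> 1 then (1-b)^2*(2+b)/6 else 0)"
    using True by (simp add: field_simps power2_eq_square power3_eq_cube)
  finally show ?thesis .
next
  case False
  have neg: "(1 - (t + b)^2)/2 \<le> 0" if "0 \<le> t" for t
  proof -
    have "1 < (t+b)^2" using that False by (simp add: one_less_power)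
    then show ?thesis by simp
  qed
  have "(\<integral>\<^sup>+t. indicator {0..} t * ennreal ((1 - (t + b)^2)/2) \<partial>lborel) = (\<integral>\<^sup>+t. 0 \<partial>(lborel::real measure))"
    by (intro nn_integral_cong) (use neg in \<open>auto simp: indicator_def ennreal_neg\<close>)
  then show ?thesis using False by simp
qed

lemma C2: "(\<integral>\<^sup>+t. indicator {0..} t * ennreal (max 0 ((1 - t^2)/2)) \<partial>lborel) = ennreal (1/3)"
proof -
  have "(\<integral>\<^sup>+t. indicator {0..} t * ennreal (max 0 ((1 - t^2)/2)) \<partial>lborel)
      = (\<integral>\<^sup>+t. ennreal ((1 - t^2)/2) * indicator {0..1} t \<partial>lborel)"
  proof (intro nn_integral_cong)
    fix t :: real
    show "indicator {0..} t * ennreal (max 0 ((1 - t^2)/2)) = ennreal ((1 - t^2)/2) * indicator {0..1} t"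
    proof (cases "0 \<le> t \<and> t \<le> 1")
      case True
      then have "t^2 \<le> 1" by (simp add: power_le_one)
      then show ?thesis using True by (simp add: indicator_def max_def)
    next
      case False
      then have "t < 0 \<or> 1 < t" by auto
      then show ?thesis
      proof
        assume "t < 0" then show ?thesis by (simp add: indicator_def)
      next
        assume t1: "1 < t"
        then have "1 < t^2" by (simp add: one_less_power)
        then have "max 0 ((1 - t^2)/2) = 0" by (simp add: max_def)
        then show ?thesis using t1 by (simp add: indicator_def)
      qed
    qed
  qed
  also have "\<dots> = ennreal ((1 - 1^3/3)/2 - (0 - 0^3/3)/2)"
  proof (rule ftc[where F="\<lambda>t. (t - t^3/3)/2"])
    show "DERIV (\<lambda>t. (t - t^3/3)/2) x :> (1 - x^2)/2" for x :: real
      by (auto intro!: derivative_eq_intros simp: field_simps power2_eq_square)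
    show "0 \<le> (1 - x^2)/2" if "x \<in> {0..1}" for x :: real
      using that by (simp add: power_le_one)
  qed auto
  finally show ?thesis by simp
qed

lemma C3: "(\<integral>\<^sup>+t. indicator {0..} t * ennreal ((max 0 (1 - t))^2/2) \<partial>lborel) = ennreal (1/6)"
proof -
  have "(\<integral>\<^sup>+t. indicator {0..} t * ennreal ((max 0 (1 - t))^2/2) \<partial>lborel)
      = (\<integral>\<^sup>+t. ennreal ((1 - t)^2/2) * indicator {0..1} t \<partial>lborel)"
    by (intro nn_integral_cong) (auto simp: indicator_def max_def)
  also have "\<dots> = ennreal (-((1 - 1)^3/6) - (-((1-0)^3/6)))"
  proof (rule ftc[where F="\<lambda>t. -((1 - t)^3/6)"])
    show "DERIV (\<lambda>t. -((1 - t)^3/6)) x :> (1 - x)^2/2" for x :: real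
      by (auto intro!: derivative_eq_intros simp: field_simps power2_eq_square)
  qed auto
  finally show ?thesis by simp
qed

lemma C4: "(\<integral>\<^sup>+t. indicator {0..} t * ennreal (if t \<le> 1 then (1-t)^2*(2+t)/6 else 0) \<partial>lborel) = ennreal (1/8)"
proof -
  have "(\<integral>\<^sup>+t. indicator {0..} t * ennreal (if t \<le> 1 then (1-t)^2*(2+t)/6 else 0) \<partial>lborel)
      = (\<integral>\<^sup>+t. ennreal ((1-t)^2*(2+t)/6) * indicator {0..1} t \<partial>lborel)"
    by (intro nn_integral_cong) (auto simp: indicator_def)
  also have "\<dots> = ennreal ((2*1 - 3*1^2/2 + 1^4/4)/6 - (2*0 - 3*0^2/2 + 0^4/4)/6)"
  proof (rule ftc[where F="\<lambda>t. (2*t - 3*t^2/2 + t^4/4)/6"])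
    show "DERIV (\<lambda>t. (2*t - 3*t^2/2 + t^4/4)/6) x :> (1-x)^2*(2+x)/6" for x :: real
      by (auto intro!: derivative_eq_intros simp: field_simps power2_eq_square power3_eq_cube)
  qed auto
  finally show ?thesis by simp
qed


definition zK :: "4 set \<Rightarrow> (4 \<Rightarrow> real) \<Rightarrow> 4 \<Rightarrow> real" where
  "zK K y i = (if i \<in> K then y i else 0)"
definition gK :: "4 set \<Rightarrow> (4 \<Rightarrow> real) \<Rightarrow> real" where
  "gK K y = max (zK K y 2 + zK K y 4) (zK K y 3)"
definition sK :: "4 set \<Rightarrow> (4 \<Rightarrow> real) \<Rightarrow> real" where
  "sK K y = zK K y 2 + zK K y 3 + zK K y 4"

lemma Dset_mem:
  assumes K: "1 \<notin> K" and y: "y \<in> PiE K (\<lambda>_. UNIV)"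
  shows "y(1:=t) \<in> Dset (insert 1 K) \<longleftrightarrow>
    (\<forall>j\<in>K. 0 \<le> y j) \<and> t \<in> {9 + gK K y - 5 * sK K y ..< 10 - 5 * sK K y}"
proof -
  have e1: "zero_ext (insert 1 K) (y(1:=t)) $ 1 = t" by (simp add: zero_ext_nth)
  have e2: "zero_ext (insert 1 K) (y(1:=t)) $ i = zK K y i" if "i \<noteq> 1" for i
    using that by (simp add: zero_ext_nth zK_def)
  have n: "(2::4) \<noteq> 1" "(3::4) \<noteq> 1" "(4::4) \<noteq> 1" by simp_all
  have ext: "y(1:=t) \<in> PiE (insert 1 K) (\<lambda>_. UNIV)"
    using y K by (auto simp: PiE_def extensional_def)
  have pos: "(\<forall>j\<in>insert 1 K. 0 \<le> (y(1:=t)) j) \<longleftrightarrow> 0 \<le> t \<and> (\<forall>j\<in>K. 0 \<le> y j)"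
    using K by auto
  have dc: "Dc (zero_ext (insert 1 K) (y(1:=t))) \<longleftrightarrow> 9 + gK K y \<le> t + 5 * sK K y \<and> t + 5 * sK K y < 10"
    unfolding Dc_def hh_def e1 e2[OF n(1)] e2[OF n(2)] e2[OF n(3)] gK_def sK_def by (simp add: algebra_simps)
  have tpos: "0 \<le> t" if "\<forall>j\<in>K. 0 \<le> y j" "9 + gK K y \<le> t + 5 * sK K y" "t + 5 * sK K y < 10"
  proof -
    have z: "0 \<le> zK K y 2" "0 \<le> zK K y 3" "0 \<le> zK K y 4" using that(1) by (auto simp: zK_def)
    have "zK K y 2 + zK K y 4 \<le> gK K y" "zK K y 3 \<le> gK K y" by (simp_all add: gK_def)
    then have s2: "sK K y \<le> 2 * gK K y" unfolding sK_def by linarith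
    have g1: "gK K y < 1" using that(2,3) by linarith
    show ?thesis using that(2) s2 g1 by linarith
  qed
  show ?thesis
  proof
    assume m: "y(1:=t) \<in> Dset (insert 1 K)"
    then have a: "\<forall>j\<in>insert 1 K. 0 \<le> (y(1:=t)) j" and b: "Dc (zero_ext (insert 1 K) (y(1:=t)))"
      unfolding Dset_def by blast+
    from a have a': "\<forall>j\<in>K. 0 \<le> y j" unfolding pos by blast
    from b have b': "9 + gK K y \<le> t + 5 * sK K y \<and> t + 5 * sK K y < 10" unfolding dc .
    show "(\<forall>j\<in>K. 0 \<le> y j) \<and> t \<in> {9 + gK K y - 5 * sK K y ..< 10 - 5 * sK K y}"
      using a' b' by simp
  next
    assume r: "(\<forall>j\<in>K. 0 \<le> y j) \<and> t \<in> {9 + gK K y - 5 * sK K y ..< 10 - 5 * sK K y}"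
    then have r1: "\<forall>j\<in>K. 0 \<le> y j" and r2: "9 + gK K y \<le> t + 5 * sK K y" "t + 5 * sK K y < 10"
      by auto
    have t0: "0 \<le> t" by (rule tpos[OF r1 r2])
    have a: "\<forall>j\<in>insert 1 K. 0 \<le> (y(1:=t)) j" unfolding pos using t0 r1 by blast
    have b: "Dc (zero_ext (insert 1 K) (y(1:=t)))" unfolding dc using r2 by blast
    show "y(1:=t) \<in> Dset (insert 1 K)" unfolding Dset_def using ext a b by blast
  qed
qed

lemma G1:
  assumes K: "1 \<notin> K"
  shows "emeasure (MM (insert 1 K)) (Dset (insert 1 K)) =
    (\<integral>\<^sup>+y. indicator {y. \<forall>j\<in>K. 0 \<le> y j} y * ennreal (1 - gK K y) \<partial>MM K)"
proof -
  have fin: "finite K" by simp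
  have "emeasure (MM (insert 1 K)) (Dset (insert 1 K)) = (\<integral>\<^sup>+y. indicator (Dset (insert 1 K)) y \<partial>MM (insert 1 K))"
    using Dset_sets by simp
  also have "\<dots> = (\<integral>\<^sup>+y. \<integral>\<^sup>+t. indicator (Dset (insert 1 K)) (y(1:=t)) \<partial>lborel \<partial>MM K)"
    by (rule PS.product_nn_integral_insert[OF fin K]) (use Dset_sets in simp)
  also have "\<dots> = (\<integral>\<^sup>+y. \<integral>\<^sup>+t. indicator {y. \<forall>j\<in>K. 0 \<le> y j} y *
        indicator {9 + gK K y - 5 * sK K y ..< 10 - 5 * sK K y} t \<partial>lborel \<partial>MM K)"
  proof (intro nn_integral_cong)
    fix y t assume y: "y \<in> space (MM K)"
    show "(indicator (Dset (insert 1 K)) (y(1:=t)) :: ennreal) = indicator {y. \<forall>j\<in>K. 0 \<le> y j} y *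
        indicator {9 + gK K y - 5 * sK K y ..< 10 - 5 * sK K y} t"
      using Dset_mem[OF K, of y t] y by (auto simp: space_MM split: split_indicator)
  qed
  also have "\<dots> = (\<integral>\<^sup>+y. indicator {y. \<forall>j\<in>K. 0 \<le> y j} y * ennreal (1 - gK K y) \<partial>MM K)"
  proof (intro nn_integral_cong)
    fix y assume y: "y \<in> space (MM K)"
    have "emeasure lborel {9 + gK K y - 5 * sK K y ..< 10 - 5 * sK K y} = ennreal (1 - gK K y)"
    proof (cases "gK K y \<le> 1")
      case True then show ?thesis by (simp add: algebra_simps)
    next
      case False then show ?thesis by (simp add: ennreal_neg)
    qed
    then show "(\<integral>\<^sup>+t. indicator {y. \<forall>j\<in>K. 0 \<le> y j} y *
        indicator {9 + gK K y - 5 * sK K y ..< 10 - 5 * sK K y} t \<partial>lborel) =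
        indicator {y. \<forall>j\<in>K. 0 \<le> y j} y * ennreal (1 - gK K y)"
      by (simp add: nn_integral_cmult_indicator)
  qed
  finally show ?thesis .
qed


lemma fub_step:
  assumes "finite I" "a \<notin> I" "F \<in> borel_measurable (MM (insert a I))"
    "\<And>y. y \<in> space (MM I) \<Longrightarrow> (\<integral>\<^sup>+t. F (y(a:=t)) \<partial>lborel) = G y"
  shows "integral\<^sup>N (MM (insert a I)) F = integral\<^sup>N (MM I) G"
  unfolding PS.product_nn_integral_insert[OF assms(1-3)] using assms(4) by (rule nn_integral_cong)

lemma ind_case: "(0 \<le> b \<Longrightarrow> X = Y) \<Longrightarrow> indicator {0..} b * X = (indicator {0..} b * Y :: ennreal)"
  by (cases "0 \<le> b") (auto simp: indicator_def)

lemma V0: "(\<integral>\<^sup>+y. indicator {y. \<forall>j\<in>{}. 0 \<le> y j} y * ennreal (1 - gK {} y) \<partial>MM {}) = 1"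
  by (subst PS.nn_integral_empty) (auto simp: gK_def zK_def)

lemma V1: assumes i: "i = 2 \<or> i = 3 \<or> i = 4"
  shows "(\<integral>\<^sup>+y. indicator {y. \<forall>j\<in>{i}. 0 \<le> y j} y * ennreal (1 - gK {i} y) \<partial>MM {i}) = ennreal (1/2)"
proof -
  have "(\<integral>\<^sup>+y. indicator {y. \<forall>j\<in>{i}. 0 \<le> y j} y * ennreal (1 - gK {i} y) \<partial>MM {i})
      = (\<integral>\<^sup>+y. (\<lambda>s. indicator {0..} s * ennreal (1 - (s + 0))) (y i) \<partial>MM {i})"
    by (intro nn_integral_cong) (use i in \<open>auto simp: gK_def zK_def indicator_def max_def\<close>)
  also have "\<dots> = (\<integral>\<^sup>+s. indicator {0..} s * ennreal (1 - (s + 0)) \<partial>lborel)"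
    by (rule PS.product_nn_integral_singleton) measurable
  also have "\<dots> = ennreal ((max 0 (1 - 0))^2 / 2)" by (rule La) simp
  finally show ?thesis by simp
qed

lemma V2a: assumes a: "a = 2 \<or> a = 4"
  shows "(\<integral>\<^sup>+y. indicator {y. \<forall>j\<in>{3,a}. 0 \<le> y j} y * ennreal (1 - gK {3,a} y) \<partial>MM {3,a}) = ennreal (1/3)"
proof -
  have a3: "a \<noteq> 3" using a by auto
  have "(\<integral>\<^sup>+y. indicator {y. \<forall>j\<in>{3,a}. 0 \<le> y j} y * ennreal (1 - gK {3,a} y) \<partial>MM {3,a})
      = (\<integral>\<^sup>+y. indicator {0..} (y a) * indicator {0..} (y 3) * ennreal (1 - max (y a) (y 3)) \<partial>MM (insert 3 {a}))"
    by (intro nn_integral_cong) (use a in \<open>auto simp: gK_def zK_def indicator_def max_def\<close>)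
  also have "\<dots> = (\<integral>\<^sup>+y. indicator {0..} (y a) * ennreal (max 0 ((1 - (y a)^2)/2)) \<partial>MM {a})"
  proof (rule fub_step)
    show "(\<lambda>y. indicator {0..} (y a) * indicator {0..} (y 3) * ennreal (1 - max (y a) (y 3))) \<in> borel_measurable (MM (insert 3 {a}))"
      by measurable
    fix y assume "y \<in> space (MM {a})"
    have "(\<integral>\<^sup>+t. indicator {0..} ((y(3:=t)) a) * indicator {0..} ((y(3:=t)) 3) * ennreal (1 - max ((y(3:=t)) a) ((y(3:=t)) 3)) \<partial>lborel)
        = (\<integral>\<^sup>+t. indicator {0..} (y a) * (indicator {0..} t * ennreal (1 - max (y a) t)) \<partial>lborel)"
      using a3 by (simp add: mult.assoc)
    also have "\<dots> = indicator {0..} (y a) * (\<integral>\<^sup>+t. indicator {0..} t * ennreal (1 - max (y a) t) \<partial>lborel)"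
      by (rule nn_integral_cmult) measurable
    also have "\<dots> = indicator {0..} (y a) * ennreal (max 0 ((1 - (y a)^2)/2))"
      by (rule ind_case) (rule Lb)
    finally show "(\<integral>\<^sup>+t. indicator {0..} ((y(3:=t)) a) * indicator {0..} ((y(3:=t)) 3) * ennreal (1 - max ((y(3:=t)) a) ((y(3:=t)) 3)) \<partial>lborel)
        = indicator {0..} (y a) * ennreal (max 0 ((1 - (y a)^2)/2))" .
  qed (use a3 in simp_all)
  also have "\<dots> = (\<integral>\<^sup>+s. indicator {0..} s * ennreal (max 0 ((1 - s^2)/2)) \<partial>lborel)"
    by (rule PS.product_nn_integral_singleton) measurable
  also have "\<dots> = ennreal (1/3)" by (rule C2)
  finally show ?thesis .
qed


lemma V24: "(\<integral>\<^sup>+y. indicator {y. \<forall>j\<in>{2,4}. 0 \<le> y j} y * ennreal (1 - gK {2,4} y) \<partial>MM {2,4}) = ennreal (1/6)"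
proof -
  have "(\<integral>\<^sup>+y. indicator {y. \<forall>j\<in>{2,4}. 0 \<le> y j} y * ennreal (1 - gK {2,4} y) \<partial>MM {2,4})
      = (\<integral>\<^sup>+y. indicator {0..} (y 4) * indicator {0..} (y 2) * ennreal (1 - (y 2 + y 4)) \<partial>MM (insert 2 {4}))"
    by (intro nn_integral_cong) (auto simp: gK_def zK_def indicator_def max_def)
  also have "\<dots> = (\<integral>\<^sup>+y. indicator {0..} (y 4) * ennreal ((max 0 (1 - y 4))^2/2) \<partial>MM {4})"
  proof (rule fub_step)
    show "(\<lambda>y. indicator {0..} (y 4) * indicator {0..} (y 2) * ennreal (1 - (y 2 + y 4))) \<in> borel_measurable (MM (insert 2 {4}))"
      by measurable
    fix y assume "y \<in> space (MM {4})"
    have "(\<integral>\<^sup>+t. indicator {0..} ((y(2:=t)) 4) * indicator {0..} ((y(2:=t)) 2) * ennreal (1 - ((y(2:=t)) 2 + (y(2:=t)) 4)) \<partial>lborel)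
        = (\<integral>\<^sup>+t. indicator {0..} (y 4) * (indicator {0..} t * ennreal (1 - (t + y 4))) \<partial>lborel)"
      by (simp add: mult.assoc)
    also have "\<dots> = indicator {0..} (y 4) * (\<integral>\<^sup>+t. indicator {0..} t * ennreal (1 - (t + y 4)) \<partial>lborel)"
      by (rule nn_integral_cmult) measurable
    also have "\<dots> = indicator {0..} (y 4) * ennreal ((max 0 (1 - y 4))^2/2)"
      by (rule ind_case) (rule La)
    finally show "(\<integral>\<^sup>+t. indicator {0..} ((y(2:=t)) 4) * indicator {0..} ((y(2:=t)) 2) * ennreal (1 - ((y(2:=t)) 2 + (y(2:=t)) 4)) \<partial>lborel)
        = indicator {0..} (y 4) * ennreal ((max 0 (1 - y 4))^2/2)" .
  qed simp_all
  also have "\<dots> = (\<integral>\<^sup>+s. indicator {0..} s * ennreal ((max 0 (1 - s))^2/2) \<partial>lborel)"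
    by (rule PS.product_nn_integral_singleton) measurable
  also have "\<dots> = ennreal (1/6)" by (rule C3)
  finally show ?thesis .
qed

lemma V234: "(\<integral>\<^sup>+y. indicator {y. \<forall>j\<in>{2,3,4}. 0 \<le> y j} y * ennreal (1 - gK {2,3,4} y) \<partial>MM {2,3,4}) = ennreal (1/8)"
proof -
  have K: "{2::4,3,4} = insert 3 {2,4}" by auto
  have "(\<integral>\<^sup>+y. indicator {y. \<forall>j\<in>{2,3,4}. 0 \<le> y j} y * ennreal (1 - gK {2,3,4} y) \<partial>MM {2,3,4})
      = (\<integral>\<^sup>+y. indicator {0..} (y 2) * indicator {0..} (y 4) * indicator {0..} (y 3) * ennreal (1 - max (y 2 + y 4) (y 3)) \<partial>MM (insert 3 {2,4}))"
    unfolding K by (intro nn_integral_cong) (auto simp: gK_def zK_def indicator_def)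
  also have "\<dots> = (\<integral>\<^sup>+y. indicator {0..} (y 4) * indicator {0..} (y 2) * ennreal (max 0 ((1 - (y 2 + y 4)^2)/2)) \<partial>MM (insert 2 {4}))"
  proof (rule fub_step)
    show "(\<lambda>y. indicator {0..} (y 2) * indicator {0..} (y 4) * indicator {0..} (y 3) * ennreal (1 - max (y 2 + y 4) (y 3))) \<in> borel_measurable (MM (insert 3 {2,4}))"
      by measurable
    fix y assume "y \<in> space (MM {2,4})"
    have "(\<integral>\<^sup>+t. indicator {0..} ((y(3:=t)) 2) * indicator {0..} ((y(3:=t)) 4) * indicator {0..} ((y(3:=t)) 3) * ennreal (1 - max ((y(3:=t)) 2 + (y(3:=t)) 4) ((y(3:=t)) 3)) \<partial>lborel)
        = (\<integral>\<^sup>+t. (indicator {0..} (y 4) * indicator {0..} (y 2)) * (indicator {0..} t * ennreal (1 - max (y 2 + y 4) t)) \<partial>lborel)"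
      by (simp add: mult.assoc mult.commute mult.left_commute)
    also have "\<dots> = (indicator {0..} (y 4) * indicator {0..} (y 2)) * (\<integral>\<^sup>+t. indicator {0..} t * ennreal (1 - max (y 2 + y 4) t) \<partial>lborel)"
      by (rule nn_integral_cmult) measurable
    also have "\<dots> = (indicator {0..} (y 4) * indicator {0..} (y 2)) * ennreal (max 0 ((1 - (y 2 + y 4)^2)/2))"
    proof (cases "0 \<le> y 2 \<and> 0 \<le> y 4")
      case True
      have "(\<integral>\<^sup>+t. indicator {0..} t * ennreal (1 - max (y 2 + y 4) t) \<partial>lborel) = ennreal (max 0 ((1 - (y 2 + y 4)^2)/2))"
        by (rule Lb) (use True in simp)
      then show ?thesis by simp
    next
      case False then show ?thesis by (auto simp: indicator_def)
    qed
    finally show "(\<integral>\<^sup>+t. indicator {0..} ((y(3:=t)) 2) * indicator {0..} ((y(3:=t)) 4) * indicator {0..} ((y(3:=t)) 3) * ennreal (1 - max ((y(3:=t)) 2 + (y(3:=t)) 4) ((y(3:=t)) 3)) \<partial>lborel)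
        = indicator {0..} (y 4) * indicator {0..} (y 2) * ennreal (max 0 ((1 - (y 2 + y 4)^2)/2))" .
  qed simp_all
  also have "\<dots> = (\<integral>\<^sup>+y. indicator {0..} (y 4) * ennreal (if y 4 \<le> 1 then (1 - y 4)^2*(2 + y 4)/6 else 0) \<partial>MM {4})"
  proof (rule fub_step)
    show "(\<lambda>y. indicator {0..} (y 4) * indicator {0..} (y 2) * ennreal (max 0 ((1 - (y 2 + y 4)^2)/2))) \<in> borel_measurable (MM (insert 2 {4}))"
      by measurable
    fix y assume "y \<in> space (MM {4})"
    have "(\<integral>\<^sup>+t. indicator {0..} ((y(2:=t)) 4) * indicator {0..} ((y(2:=t)) 2) * ennreal (max 0 ((1 - ((y(2:=t)) 2 + (y(2:=t)) 4)^2)/2)) \<partial>lborel)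
        = (\<integral>\<^sup>+t. indicator {0..} (y 4) * (indicator {0..} t * ennreal ((1 - (t + y 4)^2)/2)) \<partial>lborel)"
      by (simp add: mult.assoc ennreal_max_0)
    also have "\<dots> = indicator {0..} (y 4) * (\<integral>\<^sup>+t. indicator {0..} t * ennreal ((1 - (t + y 4)^2)/2) \<partial>lborel)"
      by (rule nn_integral_cmult) measurable
    also have "\<dots> = indicator {0..} (y 4) * ennreal (if y 4 \<le> 1 then (1 - y 4)^2*(2 + y 4)/6 else 0)"
      by (rule ind_case) (rule Lc)
    finally show "(\<integral>\<^sup>+t. indicator {0..} ((y(2:=t)) 4) * indicator {0..} ((y(2:=t)) 2) * ennreal (max 0 ((1 - ((y(2:=t)) 2 + (y(2:=t)) 4)^2)/2)) \<partial>lborel)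
        = indicator {0..} (y 4) * ennreal (if y 4 \<le> 1 then (1 - y 4)^2*(2 + y 4)/6 else 0)" .
  qed simp_all
  also have "\<dots> = (\<integral>\<^sup>+s. indicator {0..} s * ennreal (if s \<le> 1 then (1 - s)^2*(2 + s)/6 else 0) \<partial>lborel)"
    by (rule PS.product_nn_integral_singleton) measurable
  also have "\<dots> = ennreal (1/8)" by (rule C4)
  finally show ?thesis .
qed


lemma sum_Pow_insert:
  assumes "finite A" "a \<notin> A"
  shows "sum f (Pow (insert a A)) = sum f (Pow A) + sum (\<lambda>B. f (insert a B)) (Pow A)"
proof -
  have d: "Pow A \<inter> insert a ` Pow A = {}" using assms(2) by auto
  have i: "inj_on (insert a) (Pow A)" using assms(2) unfolding inj_on_def by (metis PowD insert_ident subsetD)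
  have "sum f (Pow (insert a A)) = sum f (Pow A \<union> insert a ` Pow A)" by (simp add: Pow_insert)
  also have "\<dots> = sum f (Pow A) + sum f (insert a ` Pow A)"
    by (rule sum.union_disjoint) (use assms(1) d in auto)
  also have "sum f (insert a ` Pow A) = sum (\<lambda>B. f (insert a B)) (Pow A)"
    by (simp add: sum.reindex[OF i])
  finally show ?thesis .
qed

lemma mD:
  assumes "1 \<notin> K" "(\<integral>\<^sup>+y. indicator {y. \<forall>j\<in>K. 0 \<le> y j} y * ennreal (1 - gK K y) \<partial>MM K) = ennreal v" "0 \<le> v"
  shows "measure (MM (insert 1 K)) (Dset (insert 1 K)) = v"
  using assms by (simp add: measure_def G1)

lemma m_no1: "1 \<notin> J \<Longrightarrow> measure (MM J) (Dset J) = 0"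
  by (simp add: Dset_no1)

lemma m_1: "measure (MM {1}) (Dset {1}) = 1" using mD[of "{}" 1] V0 by simp
lemma m_12: "measure (MM {1,2}) (Dset {1,2}) = 1/2" by (rule mD[OF _ V1]) simp_all
lemma m_13: "measure (MM {1,3}) (Dset {1,3}) = 1/2" by (rule mD[OF _ V1]) simp_all
lemma m_14: "measure (MM {1,4}) (Dset {1,4}) = 1/2" by (rule mD[OF _ V1]) simp_all
lemma m_134: "measure (MM {1,3,4}) (Dset {1,3,4}) = 1/3" by (rule mD[OF _ V2a]) simp_all
lemma m_123: "measure (MM {1,2,3}) (Dset {1,2,3}) = 1/3"
proof -
  have e: "{1::4,2,3} = insert 1 {3,2}" by auto
  show ?thesis unfolding e by (rule mD[OF _ V2a]) simp_all
qed
lemma m_124: "measure (MM {1,2,4}) (Dset {1,2,4}) = 1/6" by (rule mD[OF _ V24]) simp_all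
lemma m_1234: "measure (MM {1,2,3,4}) (Dset {1,2,3,4}) = 1/8" by (rule mD[OF _ V234]) simp_all

lemma nn_eq: "newton_number GF = newton_number GG"
proof -
  define c :: "4 set \<Rightarrow> real" where "c J = (-1) ^ (CARD(4) - card J) * fact (card J)" for J
  define f where "f J = c J * measure (MM J) (Dset J)" for J
  have "newton_number GF - newton_number GG =
      (\<Sum>J\<in>{J. J \<noteq> {}}. c J * vol_compl J GF) - (\<Sum>J\<in>{J. J \<noteq> {}}. c J * vol_compl J GG)"
    by (simp add: newton_number_def c_def)
  also have "\<dots> = (\<Sum>J\<in>{J. J \<noteq> {}}. c J * (vol_compl J GF - vol_compl J GG))"
    by (simp add: sum_subtractf[symmetric] right_diff_distrib)
  also have "\<dots> = (\<Sum>J\<in>{J. J \<noteq> {}}. f J)"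
    by (simp add: vol_diff f_def)
  also have "{J::4 set. J \<noteq> {}} = Pow {1,2,3,4} - {{}}" by (auto simp flip: UNIV_4)
  also have "(\<Sum>J\<in>Pow {1,2,3,4} - {{}}. f J) = (\<Sum>J\<in>Pow {1,2,3,4}. f J) - f {}"
    by (simp add: sum_diff1)
  also have "\<dots> = 0"
    by (simp add: sum_Pow_insert f_def c_def m_no1 m_1 m_12 m_13 m_14 m_134 m_123 m_124 m_1234)
  finally show ?thesis by simp
qed

theorem mainTheorem18:
  fixes SF SG :: "(real^4) set"
  defines "SF \<equiv> {vector [10,0,0,0], vector [0,10,0,0], vector [0,0,10,0], vector [0,0,0,10],
                  vector [5,1,0,0], vector [5,0,1,0], vector [5,0,0,1],
                  vector [0,1,1,0], vector [0,0,1,1]}"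
  defines "SG \<equiv> insert (vector [9,0,0,0]) SF"
  shows "newton_polyhedron SF \<subset> newton_polyhedron SG \<and>
         newton_number (newton_polyhedron SF) = newton_number (newton_polyhedron SG)"
  unfolding SG_def SF_def using strict nn_eq by simp


end
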